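(* Let $A$ be a finite alphabet and let $H\in I(A^* )$ be defined by $H(u,v)=\binom{v}{u}\eta(u,v)$. Then for all $u,v\in A^*$ and every integer $\ell\ge 0$, $$H^\ell(u,v)=\ell!\,\binom{v}{u}\,[\,|v|=|u|+\ell\,],$$ where $H^\ell$ is the $\ell$-th power of $H$ under convolution (with $H^0=\delta$).
   Context: $A^*$ is the set of finite words over the finite alphabet $A$; $|w|$ is the length of $w$. For words $u=a_1\cdots a_k$ and $v=b_1\cdots b_n$, $\binom{v}{u}$ denotes the number of order-preserving injections $\varphi:[k]\to[n]$ with $a_i=b_{\varphi(i)}$ for all $i$ (the number of occurrences of $u$ as a scattered subword/subsequence of $v$). $A^*$ is partially ordered by $u\le v$ iff $\binom{v}{u}>0$. For a locally finite poset $Q$, the incidence algebra $I(Q)$ over $\mathbb{Q}$ consists of all functions $F$ on pairs $(x,y)$ with $x\le y$, with convolution $(FG)(x,y)=\sum_{x\le z\le y}F(x,z)G(z,y)$ and identity $\delta(x,y)=[x=y]$. Here $[\psi]$ is the Iverson bracket ($1$ if $\psi$ holds, $0$ otherwise), and $\eta(x,y)=[y\text{ covers }x]$; in $A^*$, $v$ covers $u$ iff $u\le v$ and $|v|=|u|+1$. *)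

theory Defs
  imports Complex_Main "HOL-Library.FuncSet"
begin

definition subword_count :: "'a list \<Rightarrow> 'a list \<Rightarrow> nat" where
  "subword_count v u = card {\<phi> \<in> {0..<length u} \<rightarrow>\<^sub>E {0..<length v}.
      (\<forall>i j. i < j \<and> j < length u \<longrightarrow> \<phi> i < \<phi> j) \<and>
      (\<forall>i < length u. u ! i = v ! (\<phi> i))}"

definition subword_le :: "'a list \<Rightarrow> 'a list \<Rightarrow> bool" where
  "subword_le u v \<longleftrightarrow> subword_count v u > 0"

text \<open>Incidence algebra elements represented as functions on all pairs (only the values
  at pairs x <= y matter); convolution sums over the interval [x,y].\<close>

definition conv :: "('a list \<Rightarrow> 'a list \<Rightarrow> rat) \<Rightarrow> ('a list \<Rightarrow> 'a list \<Rightarrow> rat)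
    \<Rightarrow> 'a list \<Rightarrow> 'a list \<Rightarrow> rat" where
  "conv F G x y = (\<Sum>z \<in> {z. subword_le x z \<and> subword_le z y}. F x z * G z y)"

definition delta :: "'a list \<Rightarrow> 'a list \<Rightarrow> rat" where
  "delta x y = (if x = y then 1 else 0)"

definition eta :: "'a list \<Rightarrow> 'a list \<Rightarrow> rat" where
  "eta u v = (if subword_le u v \<and> length v = length u + 1 then 1 else 0)"

fun conv_pow :: "('a list \<Rightarrow> 'a list \<Rightarrow> rat) \<Rightarrow> nat \<Rightarrow> 'a list \<Rightarrow> 'a list \<Rightarrow> rat" where
  "conv_pow F 0 = delta"
| "conv_pow F (Suc n) = conv (conv_pow F n) F"

definition Hfun :: "'a list \<Rightarrow> 'a list \<Rightarrow> rat" where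
  "Hfun u v = of_nat (subword_count v u) * eta u v"

end

theory Submission
  imports Defs
begin
fun sw :: "'a list \<Rightarrow> 'a list \<Rightarrow> nat" where
  "sw v [] = 1"
| "sw [] (b#u) = 0"
| "sw (a#v) (b#u) = sw v (b#u) + (if a = b then sw v u else 0)"

definition emb :: "'a list \<Rightarrow> 'a list \<Rightarrow> (nat \<Rightarrow> nat) set" where
  "emb v u = {\<phi> \<in> {0..<length u} \<rightarrow>\<^sub>E {0..<length v}.
      (\<forall>i j. i < j \<and> j < length u \<longrightarrow> \<phi> i < \<phi> j) \<and>
      (\<forall>i < length u. u ! i = v ! (\<phi> i))}"

lemma emb_finite: "finite (emb v u)"
  unfolding emb_def by (rule finite_subset[of _ "{0..<length u} \<rightarrow>\<^sub>E {0..<length v}"]) (auto intro: finite_PiE)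

lemma emb_Nil: "emb v [] = {\<lambda>_. undefined}"
  unfolding emb_def by auto

lemma emb_Nil2: "emb [] (b#u) = {}"
  unfolding emb_def by (auto dest!: PiE_mem[where x=0])

definition sh :: "nat \<Rightarrow> (nat \<Rightarrow> nat) \<Rightarrow> nat \<Rightarrow> nat" where
  "sh n \<psi> = (\<lambda>i. if i < n then Suc (\<psi> i) else undefined)"
definition sh0 :: "nat \<Rightarrow> (nat \<Rightarrow> nat) \<Rightarrow> nat \<Rightarrow> nat" where
  "sh0 n \<psi> = (\<lambda>i. if i = 0 then 0 else if i < n then Suc (\<psi> (i - 1)) else undefined)"

lemma inj_sh: "inj_on (sh (length u)) (emb v u)"
proof
  fix x y assume x: "x \<in> emb v u" and y: "y \<in> emb v u" and e: "sh (length u) x = sh (length u) y"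
  show "x = y"
  proof
    fix i show "x i = y i"
    proof (cases "i < length u")
      case True then show ?thesis using fun_cong[OF e, of i] by (simp add: sh_def)
    next
      case False then show ?thesis using x y unfolding emb_def by (auto simp: PiE_def extensional_def)
    qed
  qed
qed

lemma inj_sh0: "inj_on (sh0 (Suc (length u))) (emb v u)"
proof
  fix x y assume x: "x \<in> emb v u" and y: "y \<in> emb v u" and e: "sh0 (Suc (length u)) x = sh0 (Suc (length u)) y"
  show "x = y"
  proof
    fix i show "x i = y i"
    proof (cases "i < length u")
      case True then show ?thesis using fun_cong[OF e, of "Suc i"] by (simp add: sh0_def)
    next
      case False then show ?thesis using x y unfolding emb_def by (auto simp: PiE_def extensional_def)
    qed
  qed
qed

lemma sh_in: "\<psi> \<in> emb v (b#u) \<Longrightarrow> sh (Suc (length u)) \<psi> \<in> emb (a#v) (b#u)"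
  unfolding emb_def sh_def by (auto simp: PiE_def extensional_def)

lemma sh0_in': assumes psi: "\<psi> \<in> emb v u" shows "sh0 (Suc (length u)) \<psi> \<in> emb (a#v) (a#u)"
proof -
  have P: "\<psi> \<in> {0..<length u} \<rightarrow>\<^sub>E {0..<length v}"
    and M: "\<And>i j. i < j \<Longrightarrow> j < length u \<Longrightarrow> \<psi> i < \<psi> j"
    and L: "\<And>i. i < length u \<Longrightarrow> u ! i = v ! (\<psi> i)"
    using psi unfolding emb_def by auto
  have rng: "\<And>i. i < length u \<Longrightarrow> \<psi> i < length v" using P by auto
  let ?f = "sh0 (Suc (length u)) \<psi>"
  have A: "?f \<in> {0..<length (a#u)} \<rightarrow>\<^sub>E {0..<length (a#v)}"
  proof (rule PiE_I)
    fix i assume "i \<in> {0..<length (a#u)}"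
    then show "?f i \<in> {0..<length (a#v)}" using rng[of "i - 1"] by (cases i) (auto simp: sh0_def)
  next
    fix i assume "i \<notin> {0..<length (a#u)}"
    then show "?f i = undefined" by (auto simp: sh0_def)
  qed
  have B: "?f i < ?f j" if "i < j" "j < length (a#u)" for i j
  proof (cases i)
    case 0 then show ?thesis using that by (auto simp: sh0_def)
  next
    case (Suc i')
    have j': "j = Suc (j - 1)" using that by simp
    then show ?thesis using that Suc M[of i' "j - 1"] by (auto simp: sh0_def)
  qed
  have C: "(a#u) ! i = (a#v) ! (?f i)" if "i < length (a#u)" for i
  proof (cases i)
    case 0 then show ?thesis by (auto simp: sh0_def)
  next
    case (Suc i') then show ?thesis using that L[of i'] by (auto simp: sh0_def)
  qed
  show ?thesis unfolding emb_def using A B C by blast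
qed

lemma emb_cons_sub:
  assumes phi: "\<phi> \<in> emb (a#v) (b#u)"
  shows "\<phi> \<in> sh (Suc (length u)) ` emb v (b#u) \<union> (if a = b then sh0 (Suc (length u)) ` emb v u else {})"
proof -
  have P: "\<phi> \<in> {0..<Suc (length u)} \<rightarrow>\<^sub>E {0..<Suc (length v)}"
    and M: "\<And>i j. i < j \<Longrightarrow> j < Suc (length u) \<Longrightarrow> \<phi> i < \<phi> j"
    and L: "\<And>i. i < Suc (length u) \<Longrightarrow> (b#u) ! i = (a#v) ! (\<phi> i)"
    using phi unfolding emb_def by auto
  have ext: "\<And>i. i \<ge> Suc (length u) \<Longrightarrow> \<phi> i = undefined" using P by (auto simp: PiE_def extensional_def)
  have rng: "\<And>i. i < Suc (length u) \<Longrightarrow> \<phi> i < Suc (length v)" using P by auto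
  show ?thesis
  proof (cases "\<phi> 0 = 0")
    case True
    have ab: "a = b" using L[of 0] True by simp
    have pos: "\<And>i. i < length u \<Longrightarrow> \<phi> (Suc i) > 0" using M[of 0] True by (metis Suc_less_eq zero_less_Suc)
    define \<psi> where "\<psi> = (\<lambda>i. if i < length u then \<phi> (Suc i) - 1 else undefined)"
    have "\<psi> \<in> emb v u"
      unfolding emb_def
    proof (intro CollectI conjI allI impI)
      show "\<psi> \<in> {0..<length u} \<rightarrow>\<^sub>E {0..<length v}"
        using rng pos by (auto simp: \<psi>_def PiE_def extensional_def) (metis Suc_less_eq Suc_pred less_SucI less_Suc_eq_0_disj)
    next
      fix i j assume "i < j \<and> j < length u"
      then show "\<psi> i < \<psi> j" using M[of "Suc i" "Suc j"] pos[of i] pos[of j] by (auto simp: \<psi>_def)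
    next
      fix i assume i: "i < length u"
      have "u ! i = (a#v) ! (\<phi> (Suc i))" using L[of "Suc i"] i by simp
      also have "\<dots> = v ! (\<phi> (Suc i) - 1)" using pos[OF i] by (cases "\<phi> (Suc i)") auto
      finally show "u ! i = v ! (\<psi> i)" using i by (simp add: \<psi>_def)
    qed
    moreover have "\<phi> = sh0 (Suc (length u)) \<psi>"
    proof
      fix i show "\<phi> i = sh0 (Suc (length u)) \<psi> i"
        using True ext[of i] pos[of "i - 1"] by (cases i) (auto simp: sh0_def \<psi>_def)
    qed
    ultimately show ?thesis using ab by auto
  next
    case False
    have pos: "\<And>i. i < Suc (length u) \<Longrightarrow> \<phi> i > 0"
    proof -
      fix i assume "i < Suc (length u)" then show "\<phi> i > 0" using M[of 0 i] False by (cases i) auto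
    qed
    define \<psi> where "\<psi> = (\<lambda>i. if i < Suc (length u) then \<phi> i - 1 else undefined)"
    have "\<psi> \<in> emb v (b#u)"
      unfolding emb_def
    proof (intro CollectI conjI allI impI)
      show "\<psi> \<in> {0..<length (b#u)} \<rightarrow>\<^sub>E {0..<length v}"
        using rng pos by (auto simp: \<psi>_def PiE_def extensional_def) (metis Suc_less_eq Suc_pred)
    next
      fix i j assume "i < j \<and> j < length (b#u)"
      then show "\<psi> i < \<psi> j" using M[of i j] pos[of i] pos[of j] by (auto simp: \<psi>_def)
    next
      fix i assume i: "i < length (b#u)"
      have "(b#u) ! i = (a#v) ! (\<phi> i)" using L[of i] i by simp
      also have "\<dots> = v ! (\<phi> i - 1)" using pos[of i] i by (cases "\<phi> i") auto
      finally show "(b#u) ! i = v ! (\<psi> i)" using i by (simp add: \<psi>_def)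
    qed
    moreover have "\<phi> = sh (Suc (length u)) \<psi>"
    proof
      fix i show "\<phi> i = sh (Suc (length u)) \<psi> i"
        using ext[of i] pos[of i] by (auto simp: sh_def \<psi>_def)
    qed
    ultimately show ?thesis by auto
  qed
qed

lemma emb_cons: "emb (a#v) (b#u) = sh (Suc (length u)) ` emb v (b#u) \<union> (if a = b then sh0 (Suc (length u)) ` emb v u else {})" (is "_ = ?R")
proof
  show "emb (a#v) (b#u) \<subseteq> ?R" using emb_cons_sub[of _ a v b u] by blast
  show "?R \<subseteq> emb (a#v) (b#u)" using sh_in[of _ v b u a] sh0_in'[of _ v u a] by auto
qed

lemma disj: "0 < n \<Longrightarrow> sh n ` A \<inter> sh0 m ` B = {}"
  by (auto simp: sh_def sh0_def dest!: fun_cong[where x=0] split: if_splits)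

lemma card_emb: "card (emb v u) = sw v u"
proof (induction v u rule: sw.induct)
  case (1 v) then show ?case by (simp add: emb_Nil)
next
  case (2 b u) then show ?case by (simp add: emb_Nil2)
next
  case (3 a v b u)
  have "card (emb (a#v) (b#u)) = card (sh (Suc (length u)) ` emb v (b#u)) + card (if a = b then sh0 (Suc (length u)) ` emb v u else {})"
    unfolding emb_cons
    by (rule card_Un_disjoint) (auto simp: emb_finite disj)
  also have "\<dots> = sw v (b#u) + (if a = b then sw v u else 0)"
    using card_image[OF inj_sh[of "b#u" v]] card_image[OF inj_sh0[of u v]] 3 by simp
  finally show ?case by simp
qed

lemma sc_sw: "subword_count v u = sw v u"
  unfolding subword_count_def card_emb[symmetric] emb_def ..

lemma sw_long: "length u > length v \<Longrightarrow> sw v u = 0"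
  by (induction v u rule: sw.induct) auto

lemma sw_same: "length u = length v \<Longrightarrow> sw v u = (if u = v then 1 else 0)"
  by (induction v u rule: sw.induct) (auto simp: sw_long)

definition del :: "nat \<Rightarrow> 'a list \<Rightarrow> 'a list" where
  "del p v = take p v @ drop (Suc p) v"

lemma del0[simp]: "del 0 (a#v) = v" by (simp add: del_def)
lemma delS[simp]: "del (Suc p) (a#v) = a # del p v" by (simp add: del_def)

lemma sw_count: "length z + 1 = length v \<Longrightarrow> sw v z = (\<Sum>p<length v. if del p v = z then 1 else 0)"
proof (induction v arbitrary: z)
  case Nil then show ?case by simp
next
  case (Cons a v)
  show ?case
  proof (cases z)
    case Nil
    with Cons.prems show ?thesis by simp
  next
    case (Cons b z')
    have "(\<Sum>p<length (a#v). if del p (a#v) = z then 1 else 0) =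
       (if v = z then 1 else 0) + (\<Sum>p<length v. if a # del p v = z then 1 else 0)"
      by (simp add: sum.lessThan_Suc_shift del: sum.lessThan_Suc)
    also have "(\<Sum>p<length v. if a # del p v = z then 1 else 0) = (if a = b then (\<Sum>p<length v. if del p v = z' then 1 else 0) else 0)"
      using Cons by auto
    also have "\<dots> = (if a = b then sw v z' else 0)" using Cons.IH[of z'] Cons.prems Cons by simp
    finally show ?thesis using Cons Cons.prems by (simp add: sw_same)
  qed
qed

lemma sw_del_sum: "(\<Sum>p<length v. sw (del p v) u) = (length v - length u) * sw v u"
proof (induction v arbitrary: u)
  case Nil then show ?case by simp
next
  case (Cons a v)
  show ?case
  proof (cases u)
    case Nil then show ?thesis by simp
  next
    case (Cons b u')
    have "(\<Sum>p<length (a#v). sw (del p (a#v)) u) = sw v u + (\<Sum>p<length v. sw (a # del p v) u)"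
      by (simp add: sum.lessThan_Suc_shift del: sum.lessThan_Suc)
    also have "(\<Sum>p<length v. sw (a # del p v) u) = (\<Sum>p<length v. sw (del p v) u) + (if a = b then (\<Sum>p<length v. sw (del p v) u') else 0)"
      using Cons by (simp add: sum.distrib)
    also have "\<dots> = (length v - length u) * sw v u + (if a = b then (length v - length u') * sw v u' else 0)"
      using Cons.IH by simp
    finally have 1: "(\<Sum>p<length (a#v). sw (del p (a#v)) u) = sw v u + (length v - length u) * sw v u + (if a = b then (length v - length u') * sw v u' else 0)" by simp
    have 2: "sw v u + (length v - length u) * sw v u = (length v + 1 - length u) * sw v u"
    proof (cases "length u > length v")
      case True then show ?thesis by (simp add: sw_long)
    next
      case False then show ?thesis by (simp add: Suc_diff_le)
    qed
    show ?thesis unfolding 1 2 using Cons by (simp add: algebra_simps)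
  qed
qed

lemma finite_le: "finite {z::('a::finite) list. length z \<le> n}"
  using finite_lists_length_le[of "UNIV::'a set" n] by simp

lemma conv_sum_T:
  fixes v :: "('a::finite) list"
  shows "(\<Sum>z\<in>{z. length z + 1 = length v}. sw v z * sw z u) = (length v - length u) * sw v u"
proof -
  let ?T = "{z::'a list. length z + 1 = length v}"
  have fT: "finite ?T" by (rule finite_subset[OF _ finite_le[of "length v"]]) auto
  have "(\<Sum>z\<in>?T. sw v z * sw z u) = (\<Sum>z\<in>?T. \<Sum>p<length v. if del p v = z then sw z u else 0)"
    by (rule sum.cong) (auto simp: sw_count sum_distrib_right intro!: sum.cong)
  also have "\<dots> = (\<Sum>p<length v. \<Sum>z\<in>?T. if del p v = z then sw z u else 0)"
    by (rule sum.swap)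
  also have "\<dots> = (\<Sum>p<length v. sw (del p v) u)"
    using fT by (intro sum.cong) (auto simp: del_def)
  finally show ?thesis using sw_del_sum by simp
qed


theorem mainTheorem1:
  fixes u v :: "('a::finite) list" and l :: nat
  shows "conv_pow Hfun l u v
     = of_nat (fact l) * of_nat (subword_count v u)
       * (if length v = length u + l then 1 else 0)"
proof (induction l arbitrary: u v)
  case 0
  show ?case by (auto simp: delta_def sc_sw sw_same)
next
  case (Suc l)
  let ?S = "{z. subword_le u z \<and> subword_le z v}"
  let ?T = "{z::'a list. length z + 1 = length v}"
  define f where "f z = of_nat (fact l) * of_nat (sw z u) * (if length z = length u + l then 1 else 0)
      * (of_nat (sw v z) * eta z v :: rat)" for z
  have "conv_pow Hfun (Suc l) u v = (\<Sum>z\<in>?S. f z)"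
    by (simp add: conv_def Suc.IH Hfun_def f_def sc_sw)
  have fin: "finite (?S \<union> ?T)"
    by (rule finite_subset[OF _ finite_le[of "length v"]])
       (auto simp: subword_le_def sc_sw, metis not_le_imp_less sw_long less_irrefl)
  have "(\<Sum>z\<in>?S. f z) = (\<Sum>z\<in>?S \<union> ?T. f z)"
    by (rule sum.mono_neutral_left[OF fin]) (auto simp: f_def subword_le_def sc_sw)
  also have "\<dots> = (\<Sum>z\<in>?T. f z)"
    by (rule sum.mono_neutral_right[OF fin]) (auto simp: f_def eta_def)
  also have "\<dots> = (\<Sum>z\<in>?T. of_nat (fact l) * (if length v = length u + Suc l then 1 else 0) * of_nat (sw v z * sw z u))"
    by (rule sum.cong) (auto simp: f_def eta_def subword_le_def sc_sw)
  also have "\<dots> = of_nat (fact l) * (if length v = length u + Suc l then 1 else 0) * of_nat (\<Sum>z\<in>?T. sw v z * sw z u)"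
    by (simp add: sum_distrib_left)
  also have "\<dots> = of_nat (fact (Suc l)) * of_nat (subword_count v u) * (if length v = length u + Suc l then 1 else 0)"
    unfolding conv_sum_T by (simp add: sc_sw algebra_simps)
  finally show ?case using \<open>conv_pow Hfun (Suc l) u v = (\<Sum>z\<in>?S. f z)\<close> by simp
qed

end
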